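(* Let $Q\subseteq\mathbb{R}^2$ be a convex polygon such that $\tau Q\subseteq Q^{\circ}$. Then the area of $Q^{\circ}$ is at least $3$.
   Context: $\tau:\mathbb{R}^2\to\mathbb{R}^2$ denotes the $90^\circ$ counterclockwise rotation. For a nonempty compact convex set $Q\subseteq\mathbb{R}^2$, its polar is $Q^{\circ}=\{x\in\mathbb{R}^2: y^\top x\le 1 \text{ for all } y\in Q\}$. *)

theory Defs
  imports "HOL-Analysis.Analysis"
begin

definition rot90 :: "real^2 \<Rightarrow> real^2" where
  "rot90 x = vector [- (x $ 2), x $ 1]"

definition polar :: "(real^2) set \<Rightarrow> (real^2) set" where
  "polar Q = {x. \<forall>y\<in>Q. y \<bullet> x \<le> 1}"

definition convex_polygon :: "(real^2) set \<Rightarrow> bool" where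
  "convex_polygon Q \<longleftrightarrow> (\<exists>S. finite S \<and> Q = convex hull S) \<and> interior Q \<noteq> {}"

end

theory Submission
  imports Defs
begin

definition det2 :: "real^2 \<Rightarrow> real^2 \<Rightarrow> real" where
  "det2 x y = x$1 * y$2 - x$2 * y$1"

lemma inner2: "(x::real^2) \<bullet> y = x$1 * y$1 + x$2 * y$2"
  by (simp add: inner_vec_def sum_2)

lemma rot90_inner: "rot90 x \<bullet> y = det2 x y"
  by (simp add: inner2 rot90_def det2_def)

lemma det2_add1[simp]: "det2 (x + y) z = det2 x z + det2 y z"
  and det2_add2[simp]: "det2 x (y + z) = det2 x y + det2 x z"
  and det2_diff1[simp]: "det2 (x - y) z = det2 x z - det2 y z"
  and det2_diff2[simp]: "det2 x (y - z) = det2 x y - det2 x z"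
  and det2_scale1[simp]: "det2 (c *\<^sub>R x) y = c * det2 x y"
  and det2_scale2[simp]: "det2 x (c *\<^sub>R y) = c * det2 x y"
  and det2_neg1[simp]: "det2 (- x) y = - det2 x y"
  and det2_neg2[simp]: "det2 x (- y) = - det2 x y"
  and det2_self[simp]: "det2 x x = 0"
  and det2_zero1[simp]: "det2 0 x = 0"
  and det2_zero2[simp]: "det2 x 0 = 0"
  by (simp_all add: det2_def algebra_simps)

lemma det2_swap: "det2 x y = - det2 y x"
  by (simp add: det2_def)

lemma cramer: "det2 u q *\<^sub>R p + det2 p u *\<^sub>R q = det2 p q *\<^sub>R u"
  by (simp add: vec_eq_iff forall_2 det2_def algebra_simps)

lemma tri_content: "measure lborel (convex hull {0, x, y}) = \<bar>det2 x y\<bar> / 2"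
  using content_triangle[of 0 x y] by (simp add: det2_def mult.commute)

lemma tri_emeasure: "emeasure lborel (convex hull {0, x::real^2, y}) = ennreal (\<bar>det2 x y\<bar> / 2)"
proof -
  have "bounded (convex hull {0, x, y})"
    by (intro compact_imp_bounded finite_imp_compact_convex_hull) auto
  then have "emeasure lborel (convex hull {0, x, y}) < \<infinity>" by (rule emeasure_bounded_finite)
  then show ?thesis using tri_content[of x y] emeasure_eq_ennreal_measure[of lborel "convex hull {0, x, y}"] by (simp add: less_top[symmetric])
qed

lemma seg_emeasure: "emeasure lborel (convex hull {0, x::real^2}) = 0"
  using tri_emeasure[of x x] by simp

lemma det2_rot1: "det2 u x = rot90 u \<bullet> x" by (simp add: rot90_inner)
lemma det2_rot2: "det2 x u = - (rot90 u \<bullet> x)" by (simp add: rot90_inner det2_swap[of x u])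

lemma meas_gt: "{x. 0 < det2 x u} \<in> sets lborel"
proof -
  have "{x. 0 < det2 x u} = {x. rot90 u \<bullet> x < 0}" by (auto simp: det2_rot2)
  then show ?thesis using borel_open[OF open_halfspace_lt] by simp
qed
lemma meas_le: "{x. det2 x u \<le> 0} \<in> sets lborel"
proof -
  have "{x. det2 x u \<le> 0} = {x. rot90 u \<bullet> x \<ge> 0}" by (auto simp: det2_rot2)
  then show ?thesis using borel_closed[OF closed_halfspace_ge] by simp
qed
lemma meas_ge: "{x. 0 \<le> det2 u x} \<in> sets lborel"
proof -
  have "{x. 0 \<le> det2 u x} = {x. rot90 u \<bullet> x \<ge> 0}" by (auto simp: det2_rot1)
  then show ?thesis using borel_closed[OF closed_halfspace_ge] by simp
qed

lemma meas_hull: "convex hull {a, b, c::real^2} \<in> sets lborel"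
  unfolding sets_lborel by (intro borel_closed compact_imp_closed finite_imp_compact_convex_hull) auto
lemma meas_hull2: "convex hull {a, b::real^2} \<in> sets lborel"
  unfolding sets_lborel by (intro borel_closed compact_imp_closed finite_imp_compact_convex_hull) auto

lemma tri_sub:
  assumes G: "G \<in> sets lborel" and sub: "convex hull {0,x,y} - G \<subseteq> convex hull {0,z::real^2}"
  shows "ennreal (\<bar>det2 x y\<bar>/2) \<le> emeasure lborel (convex hull {0,x,y} \<inter> G)"
proof -
  let ?T = "convex hull {0,x,y}"
  have m1: "?T \<inter> G \<in> sets lborel" by (rule sets.Int[OF meas_hull G])
  have m2: "convex hull {0,z} \<in> sets lborel" by (rule meas_hull2)
  have "ennreal (\<bar>det2 x y\<bar>/2) = emeasure lborel ?T" by (simp add: tri_emeasure)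
  also have "\<dots> \<le> emeasure lborel ((?T \<inter> G) \<union> convex hull {0,z})"
    by (rule emeasure_mono) (use sub sets.Un[OF m1 m2] in auto)
  also have "\<dots> \<le> emeasure lborel (?T \<inter> G) + emeasure lborel (convex hull {0,z})"
    by (rule emeasure_subadditive[OF m1 m2])
  also have "\<dots> = emeasure lborel (?T \<inter> G)" by (simp add: seg_emeasure)
  finally show ?thesis .
qed

lemma hull3_elem:
  assumes "x \<in> convex hull {0, p, q::real^2}"
  obtains \<beta> \<gamma> where "\<beta> \<ge> 0" "\<gamma> \<ge> 0" "\<beta> + \<gamma> \<le> 1" "x = \<beta> *\<^sub>R p + \<gamma> *\<^sub>R q"
  using assms unfolding convex_hull_3 by fastforce

lemma hull2_elem:
  assumes "\<gamma> \<ge> 0" "\<gamma> \<le> 1"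
  shows "\<gamma> *\<^sub>R q \<in> convex hull {0, q::real^2}"
proof -
  have "\<gamma> *\<^sub>R q = (1-\<gamma>) *\<^sub>R 0 + \<gamma> *\<^sub>R q" by simp
  then show ?thesis unfolding convex_hull_2 mem_Collect_eq
    by (intro exI[of _ "1-\<gamma>"] exI[of _ \<gamma>]) (use assms in simp)
qed

lemma hull3_sub:
  assumes "convex K" "0 \<in> K" "p \<in> K" "q \<in> K"
  shows "convex hull {0, p, q} \<subseteq> K"
  using assms by (intro hull_minimal) auto

lemma sector:
  fixes K :: "(real^2) set" and p q u w1 w2 :: "real^2"
  assumes K: "convex K" "K \<in> sets lborel" "0 \<in> K"
    and pq: "p \<in> K" "q \<in> K" "u \<in> K"
    and w1: "\<forall>x\<in>K. w1 \<bullet> x \<le> 1" "w1 \<bullet> p \<ge> 1"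
    and w2: "\<forall>x\<in>K. w2 \<bullet> x \<le> 1" "w2 \<bullet> q \<ge> 1"
    and c: "det2 u (q - p) \<ge> 1"
    and d: "det2 p q > 0"
  shows "ennreal (1/2) \<le> emeasure lborel (K \<inter> {x. 0 \<le> det2 p x \<and> 0 < det2 x q})"
proof -
  define Sec where "Sec = {x. 0 \<le> det2 p x \<and> 0 < det2 x q}"
  have Sec_eq: "Sec = {x. 0 \<le> det2 p x} \<inter> {x. 0 < det2 x q}" unfolding Sec_def by auto
  have mSec: "Sec \<in> sets lborel" unfolding Sec_eq by (intro sets.Int meas_ge meas_gt)
  have mK: "K \<inter> Sec \<in> sets lborel" using K(2) mSec by auto
  define dd where "dd = det2 p q"
  define a where "a = det2 u q / dd"
  define b where "b = det2 p u / dd"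
  have dpos: "dd > 0" using d by (simp add: dd_def)
  have u_eq: "u = a *\<^sub>R p + b *\<^sub>R q"
  proof -
    have "dd *\<^sub>R u = (a * dd) *\<^sub>R p + (b * dd) *\<^sub>R q"
      using cramer[of u q p] dpos by (simp add: a_def b_def dd_def)
    then have "dd *\<^sub>R u = dd *\<^sub>R (a *\<^sub>R p + b *\<^sub>R q)" by (simp add: algebra_simps)
    then show ?thesis using dpos by simp
  qed
  have duq: "det2 u q = a * dd" and dpu: "det2 p u = b * dd" using dpos by (simp_all add: a_def b_def)
  have cab: "(a + b) * dd \<ge> 1"
  proof -
    have "det2 u (q - p) = det2 u q + det2 p u" using det2_swap[of u p] by simp
    then show ?thesis using c duq dpu by (simp add: algebra_simps)
  qed
  have mono: "emeasure lborel A \<le> emeasure lborel (K \<inter> Sec)" if "A \<subseteq> K \<inter> Sec" for A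
    by (rule emeasure_mono[OF that mK])
  show ?thesis
  proof (cases "a < 0 \<or> b < 0")
    case True
    have d1: "dd \<ge> 1"
    proof -
      have ab1: "a + b \<le> 1"
      proof (cases "b < 0")
        case True
        have "a * dd > 0"
        proof -
          have "b * dd < 0" using True dpos by (simp add: mult_neg_pos)
          then show ?thesis using cab by (simp add: algebra_simps)
        qed
        then have apos: "a > 0" using dpos by (simp add: zero_less_mult_iff)
        define r where "r = (1/(1-b)) *\<^sub>R u + (-b/(1-b)) *\<^sub>R q"
        have "r \<in> K" unfolding r_def
          using True pq by (intro convexD[OF K(1)]) (auto simp: field_simps)
        moreover have "r = (a/(1-b)) *\<^sub>R p"
          using True unfolding r_def u_eq by (simp add: algebra_simps divide_simps)
             (simp add: scaleR_add_right[symmetric] scaleR_diff_left[symmetric] algebra_simps)?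
        ultimately have "w1 \<bullet> ((a/(1-b)) *\<^sub>R p) \<le> 1" using w1 by auto
        then have "(a/(1-b)) * (w1 \<bullet> p) \<le> 1" by simp
        moreover have "(a/(1-b)) * 1 \<le> (a/(1-b)) * (w1 \<bullet> p)"
          using w1(2) apos True by (intro mult_left_mono) auto
        ultimately have "a/(1-b) \<le> 1" by simp
        then show ?thesis using True by (simp add: divide_simps split: if_splits)
      next
        case False
        then have "a < 0" using \<open>a < 0 \<or> b < 0\<close> by simp
        have "b * dd > 0"
        proof -
          have "a * dd < 0" using \<open>a < 0\<close> dpos by (simp add: mult_neg_pos)
          then show ?thesis using cab by (simp add: algebra_simps)
        qed
        then have bpos: "b > 0" using dpos by (simp add: zero_less_mult_iff)
        define r where "r = (1/(1-a)) *\<^sub>R u + (-a/(1-a)) *\<^sub>R p"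
        have "r \<in> K" unfolding r_def
          using \<open>a < 0\<close> pq by (intro convexD[OF K(1)]) (auto simp: field_simps)
        moreover have "r = (b/(1-a)) *\<^sub>R q"
          using \<open>a < 0\<close> unfolding r_def u_eq by (simp add: algebra_simps divide_simps)
             (simp add: scaleR_add_right[symmetric] scaleR_diff_left[symmetric] algebra_simps)?
        ultimately have "w2 \<bullet> ((b/(1-a)) *\<^sub>R q) \<le> 1" using w2 by auto
        then have "(b/(1-a)) * (w2 \<bullet> q) \<le> 1" by simp
        moreover have "(b/(1-a)) * 1 \<le> (b/(1-a)) * (w2 \<bullet> q)"
          using w2(2) bpos \<open>a < 0\<close> by (intro mult_left_mono) auto
        ultimately have "b/(1-a) \<le> 1" by simp
        then show ?thesis using \<open>a < 0\<close> by (simp add: divide_simps split: if_splits)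
      qed
      have "(a + b) * dd \<le> 1 * dd" using ab1 dpos by (intro mult_right_mono) auto
      then show ?thesis using cab by simp
    qed
    have "ennreal (\<bar>det2 p q\<bar>/2) \<le> emeasure lborel (convex hull {0,p,q} \<inter> Sec)"
    proof (rule tri_sub[OF mSec])
      show "convex hull {0, p, q} - Sec \<subseteq> convex hull {0, q}"
      proof
        fix x assume x: "x \<in> convex hull {0, p, q} - Sec"
        then obtain \<beta> \<gamma> where bg: "\<beta> \<ge> 0" "\<gamma> \<ge> 0" "\<beta> + \<gamma> \<le> 1" "x = \<beta> *\<^sub>R p + \<gamma> *\<^sub>R q"
          using hull3_elem by blast
        have "\<not> (0 \<le> \<gamma> * dd \<and> 0 < \<beta> * dd)" using x bg(4) unfolding Sec_def dd_def
          using det2_swap[of q p] by simp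
        then have "\<beta> = 0" using bg dpos by (auto simp: zero_less_mult_iff)
        then show "x \<in> convex hull {0, q}" using bg hull2_elem by auto
      qed
    qed
    also have "\<dots> \<le> emeasure lborel (K \<inter> Sec)"
      using hull3_sub[OF K(1) K(3) pq(1) pq(2)] by (intro mono) auto
    finally have "ennreal (\<bar>det2 p q\<bar>/2) \<le> emeasure lborel (K \<inter> Sec)" .
    moreover have "ennreal (1/2) \<le> ennreal (\<bar>det2 p q\<bar>/2)"
      by (intro ennreal_leI) (use d1 in \<open>simp add: dd_def\<close>)
    ultimately show ?thesis unfolding Sec_def by (rule order_trans[rotated])
  next
    case False
    then have a0: "a \<ge> 0" and b0: "b \<ge> 0" by auto
    define P1 where "P1 = convex hull {0,p,u} \<inter> (Sec \<inter> {x. 0 < det2 x u})"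
    define P2 where "P2 = convex hull {0,u,q} \<inter> (Sec \<inter> {x. det2 x u \<le> 0})"
    have mP1: "P1 \<in> sets lborel" unfolding P1_def by (intro sets.Int meas_hull mSec meas_gt)
    have mP2: "P2 \<in> sets lborel" unfolding P2_def by (intro sets.Int meas_hull mSec meas_le)
    have e1: "ennreal (b * dd / 2) \<le> emeasure lborel P1"
    proof (cases "b = 0")
      case True then show ?thesis by simp
    next
      case False
      then have bpos: "b > 0" using b0 by simp
      have "ennreal (\<bar>det2 p u\<bar>/2) \<le> emeasure lborel P1"
        unfolding P1_def
      proof (rule tri_sub)
        show "Sec \<inter> {x. 0 < det2 x u} \<in> sets lborel" by (intro sets.Int mSec meas_gt)
        show "convex hull {0, p, u} - Sec \<inter> {x. 0 < det2 x u} \<subseteq> convex hull {0, u}"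
        proof
          fix x assume x: "x \<in> convex hull {0, p, u} - Sec \<inter> {x. 0 < det2 x u}"
          then obtain \<beta> \<gamma> where bg: "\<beta> \<ge> 0" "\<gamma> \<ge> 0" "\<beta> + \<gamma> \<le> 1" "x = \<beta> *\<^sub>R p + \<gamma> *\<^sub>R u"
            using hull3_elem by blast
          have "\<beta> = 0"
          proof (rule ccontr)
            assume "\<beta> \<noteq> 0" then have bp: "\<beta> > 0" using bg by simp
            have "det2 p x = \<gamma> * (b * dd)" using bg(4) dpu by simp
            moreover have "det2 x q = \<beta> * dd + \<gamma> * (a * dd)" using bg(4) duq by (simp add: dd_def)
            moreover have "det2 x u = \<beta> * (b * dd)" using bg(4) dpu by simp
            ultimately have "x \<in> Sec \<inter> {x. 0 < det2 x u}" unfolding Sec_def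
              using bp bg(2) bpos dpos a0
              by (auto intro!: add_pos_nonneg mult_nonneg_nonneg mult_pos_pos)
            then show False using x by simp
          qed
          then show "x \<in> convex hull {0, u}" using bg hull2_elem by auto
        qed
      qed
      then show ?thesis using dpu bpos dpos by simp
    qed
    have e2: "ennreal (a * dd / 2) \<le> emeasure lborel P2"
    proof (cases "a = 0")
      case True then show ?thesis by simp
    next
      case False
      then have apos: "a > 0" using a0 by simp
      have "ennreal (\<bar>det2 u q\<bar>/2) \<le> emeasure lborel P2"
        unfolding P2_def
      proof (rule tri_sub)
        show "Sec \<inter> {x. det2 x u \<le> 0} \<in> sets lborel" by (intro sets.Int mSec meas_le)
        show "convex hull {0, u, q} - Sec \<inter> {x. det2 x u \<le> 0} \<subseteq> convex hull {0, q}"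
        proof
          fix x assume x: "x \<in> convex hull {0, u, q} - Sec \<inter> {x. det2 x u \<le> 0}"
          then obtain \<beta> \<gamma> where bg: "\<beta> \<ge> 0" "\<gamma> \<ge> 0" "\<beta> + \<gamma> \<le> 1" "x = \<beta> *\<^sub>R u + \<gamma> *\<^sub>R q"
            using hull3_elem by blast
          have "\<beta> = 0"
          proof (rule ccontr)
            assume "\<beta> \<noteq> 0" then have bp: "\<beta> > 0" using bg by simp
            have "det2 p x = \<beta> * (b * dd) + \<gamma> * dd" using bg(4) dpu by (simp add: dd_def)
            moreover have "det2 x q = \<beta> * (a * dd)" using bg(4) duq by simp
            moreover have "det2 x u = - (\<gamma> * (a * dd))" using bg(4) duq det2_swap[of q u] by simp
            ultimately have "x \<in> Sec \<inter> {x. det2 x u \<le> 0}" unfolding Sec_def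
              using bp bg(2) apos dpos b0
              by (auto intro!: add_nonneg_nonneg mult_nonneg_nonneg mult_pos_pos)
            then show False using x by simp
          qed
          then show "x \<in> convex hull {0, q}" using bg hull2_elem by auto
        qed
      qed
      then show ?thesis using duq apos dpos by simp
    qed
    have disj: "P1 \<inter> P2 = {}" unfolding P1_def P2_def by auto
    have sub: "P1 \<union> P2 \<subseteq> K \<inter> Sec"
      using hull3_sub[OF K(1) K(3) pq(1) pq(3)] hull3_sub[OF K(1) K(3) pq(3) pq(2)]
      unfolding P1_def P2_def by auto
    have "ennreal (1/2) \<le> ennreal (b * dd / 2) + ennreal (a * dd / 2)"
    proof -
      have eq: "(a + b) * dd / 2 = b * dd / 2 + a * dd / 2" by (simp add: field_simps)
      have "ennreal (b * dd / 2) + ennreal (a * dd / 2) = ennreal ((a + b) * dd / 2)"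
        unfolding eq using a0 b0 dpos by (intro ennreal_plus[symmetric]) auto
      moreover have "ennreal (1/2) \<le> ennreal ((a + b) * dd / 2)"
        using cab by (intro ennreal_leI) simp
      ultimately show ?thesis by simp
    qed
    also have "\<dots> \<le> emeasure lborel P1 + emeasure lborel P2" using e1 e2 by (rule add_mono)
    also have "\<dots> = emeasure lborel (P1 \<union> P2)" by (rule plus_emeasure[OF mP1 mP2 disj])
    also have "\<dots> \<le> emeasure lborel (K \<inter> Sec)" by (rule mono[OF sub])
    finally show ?thesis unfolding Sec_def .
  qed
qed

definition Fn :: "(real^2) set \<Rightarrow> real^2 \<Rightarrow> real" where
  "Fn W z = Max ((\<lambda>w. w \<bullet> z) ` W)"

definition K0 :: "(real^2) set \<Rightarrow> (real^2) set" where
  "K0 W = {z. \<forall>w\<in>W. w \<bullet> z \<le> 1}"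

lemma Fn_ge: "finite W \<Longrightarrow> w \<in> W \<Longrightarrow> w \<bullet> z \<le> Fn W z"
  unfolding Fn_def by (rule Max_ge) auto

lemma Fn_ex: "finite W \<Longrightarrow> W \<noteq> {} \<Longrightarrow> \<exists>w\<in>W. Fn W z = w \<bullet> z"
proof -
  assume "finite W" "W \<noteq> {}"
  then have "Fn W z \<in> (\<lambda>w. w \<bullet> z) ` W" unfolding Fn_def by (intro Max_in) auto
  then show ?thesis by auto
qed

lemma K0_iff: "finite W \<Longrightarrow> W \<noteq> {} \<Longrightarrow> z \<in> K0 W \<longleftrightarrow> Fn W z \<le> 1"
proof -
  assume a: "finite W" "W \<noteq> {}"
  obtain w0 where "w0 \<in> W" "Fn W z = w0 \<bullet> z" using Fn_ex[OF a] by blast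
  moreover have "w \<bullet> z \<le> 1" if "Fn W z \<le> 1" "w \<in> W" for w
    using Fn_ge[OF a(1) that(2), of z] that(1) by linarith
  ultimately show ?thesis unfolding K0_def by auto
qed

lemma Fn_scale:
  assumes "finite W" "W \<noteq> {}" "c \<ge> 0"
  shows "Fn W (c *\<^sub>R z) = c * Fn W z"
proof -
  obtain w where w: "w \<in> W" "Fn W (c *\<^sub>R z) = w \<bullet> (c *\<^sub>R z)" using Fn_ex assms by blast
  obtain w' where w': "w' \<in> W" "Fn W z = w' \<bullet> z" using Fn_ex assms by blast
  have "w \<bullet> z \<le> Fn W z" using Fn_ge assms w by blast
  then have 1: "Fn W (c *\<^sub>R z) \<le> c * Fn W z" using w assms by (simp add: mult_left_mono)
  have "w' \<bullet> (c *\<^sub>R z) \<le> Fn W (c *\<^sub>R z)" using Fn_ge assms w' by blast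
  then have 2: "c * Fn W z \<le> Fn W (c *\<^sub>R z)" using w' by simp
  show ?thesis using 1 2 by simp
qed

lemma Fn_zero: "finite W \<Longrightarrow> W \<noteq> {} \<Longrightarrow> Fn W 0 = 0"
  using Fn_scale[of W 0 0] by simp

lemma Fn_neg:
  assumes "finite W" "W \<noteq> {}" "\<forall>w\<in>W. - w \<in> W"
  shows "Fn W (- z) = Fn W z"
proof -
  have "Fn W (- z) \<le> Fn W z" if "\<forall>w\<in>W. - w \<in> W" for z
  proof -
    obtain w where w: "w \<in> W" "Fn W (- z) = w \<bullet> (- z)" using Fn_ex assms by blast
    have "(- w) \<bullet> z \<le> Fn W z" using Fn_ge assms w that by blast
    then show ?thesis using w by simp
  qed
  from this[of z] this[of "- z"] assms show ?thesis by simp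
qed

lemma Fn_cont:
  assumes "finite W" "W \<noteq> {}"
  shows "continuous_on UNIV (Fn W)"
proof -
  define C where "C = (\<Sum>w\<in>W. norm w)"
  have nC: "norm w \<le> C" if "w \<in> W" for w
    unfolding C_def using assms that by (intro member_le_sum) auto
  have half: "Fn W x - Fn W y \<le> C * dist x y" for x y
  proof -
    obtain w where w: "w \<in> W" "Fn W x = w \<bullet> x" using Fn_ex assms by blast
    have "w \<bullet> y \<le> Fn W y" using Fn_ge assms w by blast
    then have "Fn W x - Fn W y \<le> w \<bullet> (x - y)" using w by (simp add: inner_diff_right)
    also have "\<dots> \<le> norm w * norm (x - y)" by (rule norm_cauchy_schwarz)
    also have "\<dots> \<le> C * norm (x - y)" using nC[OF w(1)] by (intro mult_right_mono) auto
    finally show ?thesis by (simp add: dist_norm)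
  qed
  have "C-lipschitz_on UNIV (Fn W)"
    unfolding lipschitz_on_def
  proof (intro conjI ballI)
    show "0 \<le> C" unfolding C_def by (intro sum_nonneg) auto
    fix x y :: "real^2"
    show "dist (Fn W x) (Fn W y) \<le> C * dist x y"
    proof -
      have "dist y x = dist x y" by (rule dist_commute)
      then show ?thesis using half[of x y] half[of y x] unfolding dist_real_def by (simp add: abs_le_iff)
    qed
  qed
  then show ?thesis by (rule lipschitz_on_continuous_on)
qed

lemma Fn_pos:
  assumes "finite W" "W \<noteq> {}" "\<forall>w\<in>W. - w \<in> W" "\<exists>w\<in>W. w \<bullet> z \<noteq> 0"
  shows "Fn W z > 0"
proof -
  obtain w where w: "w \<in> W" "w \<bullet> z \<noteq> 0" using assms by blast
  show ?thesis
  proof (cases "w \<bullet> z > 0")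
    case True then show ?thesis using Fn_ge[OF assms(1) w(1), of z] by simp
  next
    case False
    then have "(- w) \<bullet> z > 0" using w by simp
    then show ?thesis using Fn_ge[OF assms(1), of "- w" z] assms(3) w by auto
  qed
qed

lemma hexagon:
  assumes fin: "finite W" and ne: "W \<noteq> {}" and sym: "\<forall>w\<in>W. - w \<in> W"
    and span: "\<forall>z. z \<noteq> 0 \<longrightarrow> (\<exists>w\<in>W. w \<bullet> z \<noteq> 0)"
  shows "\<exists>v1 v2. Fn W v1 = 1 \<and> Fn W v2 = 1 \<and> Fn W (v2 - v1) = 1 \<and> det2 v1 v2 > 0"
proof -
  have pos: "Fn W z > 0" if "z \<noteq> 0" for z
    using Fn_pos[OF fin ne sym] span that by blast
  define e :: "real^2" where "e = vector [1, 0]"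
  have "e \<noteq> 0" unfolding e_def by (metis vector_2(1) zero_index zero_neq_one)
  then have Fe: "Fn W e > 0" by (rule pos)
  define c where "c = 1 / Fn W e"
  have c0: "c > 0" using Fe by (simp add: c_def)
  define v1 where "v1 = c *\<^sub>R e"
  have Fv1: "Fn W v1 = 1" unfolding v1_def using Fn_scale[OF fin ne, of c e] c0 Fe by (simp add: c_def)
  have v1c: "v1 $ 1 = c" "v1 $ 2 = 0" unfolding v1_def e_def by simp_all
  define r where "r = rot90 v1"
  have rc: "r $ 1 = 0" "r $ 2 = c" unfolding r_def rot90_def using v1c by simp_all
  define p where "p = (\<lambda>t::real. (1 - 2*t) *\<^sub>R v1 + (t * (1 - t)) *\<^sub>R r)"
  have pnz: "p t \<noteq> 0" if "0 \<le> t" "t \<le> 1" for t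
  proof
    assume "p t = 0"
    then have h1: "(1 - 2*t) * c = 0" and h2: "(t * (1 - t)) * c = 0"
      unfolding p_def by (simp_all add: vec_eq_iff forall_2 v1c rc)
    from h1 c0 have "t = 1/2" by simp
    with h2 c0 show False by simp
  qed
  define g where "g = (\<lambda>t. Fn W ((1 / Fn W (p t)) *\<^sub>R p t - v1))"
  have contF: "continuous_on UNIV (Fn W)" by (rule Fn_cont[OF fin ne])
  have contp: "continuous_on {0..1} p" unfolding p_def by (intro continuous_intros)
  have contFp: "continuous_on {0..1} (\<lambda>t. Fn W (p t))"
    by (rule continuous_on_compose2[OF contF contp]) auto
  have Fnz: "\<forall>x\<in>{0..1}. Fn W (p x) \<noteq> 0" using pos pnz by fastforce
  have contg: "continuous_on {0..1} g"
    unfolding g_def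
    by (rule continuous_on_compose2[OF contF]) 
       (auto intro!: continuous_intros contFp contp Fnz)
  have p0: "p 0 = v1" and p1: "p 1 = - v1" unfolding p_def by simp_all
  have Fnv1: "Fn W (- v1) = 1" using Fn_neg[OF fin ne sym] Fv1 by simp
  have g0: "g 0 = 0" unfolding g_def p0 Fv1 using Fn_zero[OF fin ne] by simp
  have g1: "g 1 = 2"
  proof -
    have "(1 / Fn W (p 1)) *\<^sub>R p 1 - v1 = 2 *\<^sub>R (- v1)" unfolding p1 Fnv1 scaleR_2 by simp
    then show ?thesis unfolding g_def using Fn_scale[OF fin ne, of 2 "- v1"] Fnv1 by simp
  qed
  obtain t where t: "0 \<le> t" "t \<le> 1" "g t = 1"
    using IVT'[of g 0 1 1] g0 g1 contg by auto
  have t0: "t \<noteq> 0" using t g0 by auto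
  have t1: "t \<noteq> 1" using t g1 by auto
  define v2 where "v2 = (1 / Fn W (p t)) *\<^sub>R p t"
  have Fpt: "Fn W (p t) > 0" using pos pnz t by blast
  have Fv2: "Fn W v2 = 1" unfolding v2_def using Fn_scale[OF fin ne, of "1 / Fn W (p t)" "p t"] Fpt by simp
  have Fv21: "Fn W (v2 - v1) = 1" using t(3) unfolding g_def v2_def .
  have "det2 v1 v2 = (1 / Fn W (p t)) * ((t * (1 - t)) * (c * c))"
    unfolding v2_def p_def by (simp add: det2_def v1c rc)
  moreover have "(t * (1 - t)) > 0" using t t0 t1 by (simp add: mult_pos_pos)
  ultimately have "det2 v1 v2 > 0" using Fpt c0 by simp
  then show ?thesis using Fv1 Fv2 Fv21 by blast
qed

lemma det2_rot_left: "det2 (rot90 w) y = - (w \<bullet> y)"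
  by (simp add: det2_def rot90_def inner2)

lemma K0_convex: "convex (K0 W)"
proof -
  have "K0 W = (\<Inter>w\<in>W. {z. w \<bullet> z \<le> 1})" unfolding K0_def by auto
  then show ?thesis by (auto intro!: convex_INT convex_halfspace_le)
qed

lemma K0_closed: "closed (K0 W)"
proof -
  have "K0 W = (\<Inter>w\<in>W. {z. w \<bullet> z \<le> 1})" unfolding K0_def by auto
  then show ?thesis by (auto intro!: closed_INT closed_halfspace_le)
qed

lemma K0_meas: "K0 W \<in> sets lborel"
  unfolding sets_lborel by (rule borel_closed[OF K0_closed])

lemma sector_W:
  assumes det: "\<forall>w\<in>W. \<forall>w'\<in>W. det2 w w' \<le> 1"
    and pq: "p \<in> K0 W" "q \<in> K0 W"
    and w: "w1 \<in> W" "w1 \<bullet> p \<ge> 1" "w2 \<in> W" "w2 \<bullet> q \<ge> 1" "w3 \<in> W" "w3 \<bullet> (p - q) \<ge> 1"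
    and d: "det2 p q > 0"
  shows "ennreal (1/2) \<le> emeasure lborel (K0 W \<inter> {x. 0 \<le> det2 p x \<and> 0 < det2 x q})"
proof (rule sector[OF K0_convex K0_meas _ pq])
  show "0 \<in> K0 W" unfolding K0_def by simp
  have "w \<bullet> rot90 w3 \<le> 1" if "w \<in> W" for w
    using det w(5) that inner_commute[of w "rot90 w3"] rot90_inner[of w3 w] by auto
  then show "rot90 w3 \<in> K0 W" unfolding K0_def by auto
  show "\<forall>x\<in>K0 W. w1 \<bullet> x \<le> 1" "\<forall>x\<in>K0 W. w2 \<bullet> x \<le> 1" unfolding K0_def using w by auto
  show "1 \<le> w1 \<bullet> p" "1 \<le> w2 \<bullet> q" using w by auto
  show "1 \<le> det2 (rot90 w3) (q - p)" using w(6) by (simp add: det2_rot_left inner_diff_right)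
  show "0 < det2 p q" by (rule d)
qed

theorem lemma4:
  fixes Q :: "(real^2) set"
  assumes "convex_polygon Q"
    and "rot90 ` Q \<subseteq> polar Q"
  shows "emeasure lborel (polar Q) \<ge> 3"
proof -
  obtain S where S: "finite S" "Q = convex hull S" and intQ: "interior Q \<noteq> {}"
    using assms(1) unfolding convex_polygon_def by blast
  define W where "W = S \<union> uminus ` S"
  have fin: "finite W" unfolding W_def using S(1) by simp
  have "Q \<noteq> {}" using intQ interior_subset by blast
  then have "S \<noteq> {}" using S(2) by auto
  then have ne: "W \<noteq> {}" unfolding W_def by simp
  have sym: "\<forall>w\<in>W. - w \<in> W" unfolding W_def by auto
  have SQ: "S \<subseteq> Q" unfolding S(2) by (rule hull_subset)
  have detQ: "det2 x y \<le> 1" if "x \<in> Q" "y \<in> Q" for x y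
  proof -
    have "rot90 x \<in> polar Q" using assms(2) imageI[OF that(1), of rot90] by (rule subsetD)
    then have "y \<bullet> rot90 x \<le> 1" using that(2) unfolding polar_def by simp
    then show ?thesis using inner_commute[of y "rot90 x"] rot90_inner[of x y] by simp
  qed
  have det: "\<forall>w\<in>W. \<forall>w'\<in>W. det2 w w' \<le> 1"
  proof (intro ballI)
    fix w w' assume w: "w \<in> W" and w': "w' \<in> W"
    obtain s where s: "s \<in> S" "w = s \<or> w = - s" using w unfolding W_def by blast
    obtain s' where s': "s' \<in> S" "w' = s' \<or> w' = - s'" using w' unfolding W_def by blast
    have 1: "det2 s s' \<le> 1" using detQ SQ s(1) s'(1) by blast
    have 2: "det2 s' s \<le> 1" using detQ SQ s(1) s'(1) by blast
    have 3: "det2 s' s = - det2 s s'" by (rule det2_swap)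
    from s(2) s'(2) show "det2 w w' \<le> 1"
    proof (elim disjE)
      assume "w = s" "w' = s'" then show ?thesis using 1 by simp
    next
      assume "w = s" "w' = - s'" then show ?thesis using 2 3 by simp
    next
      assume "w = - s" "w' = s'" then show ?thesis using 2 3 by simp
    next
      assume "w = - s" "w' = - s'" then show ?thesis using 1 by simp
    qed
  qed
  have span: "\<forall>z. z \<noteq> 0 \<longrightarrow> (\<exists>w\<in>W. w \<bullet> z \<noteq> 0)"
  proof (intro allI impI)
    fix z :: "real^2" assume z: "z \<noteq> 0"
    show "\<exists>w\<in>W. w \<bullet> z \<noteq> 0"
    proof (rule ccontr)
      assume "\<not> ?thesis"
      then have "S \<subseteq> {x. z \<bullet> x = 0}" unfolding W_def by (auto simp: inner_commute)
      then have "Q \<subseteq> {x. z \<bullet> x = 0}" unfolding S(2)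
        by (intro hull_minimal) (auto intro: convex_hyperplane)
      then have "interior Q \<subseteq> interior {x. z \<bullet> x = 0}" by (rule interior_mono)
      then show False using intQ z by simp
    qed
  qed
  obtain v1 v2 where v: "Fn W v1 = 1" "Fn W v2 = 1" "Fn W (v2 - v1) = 1" "det2 v1 v2 > 0"
    using hexagon[OF fin ne sym span] by blast
  define v3 where "v3 = v2 - v1"
  define nm where "nm = (\<lambda>v. v \<in> K0 W \<and> (\<exists>w\<in>W. w \<bullet> v \<ge> 1))"
  have nm1: "nm v" if "Fn W v = 1" for v
  proof -
    obtain w where w: "w \<in> W" "Fn W v = w \<bullet> v" using Fn_ex[OF fin ne] by blast
    have "v \<in> K0 W" using K0_iff[OF fin ne, of v] that by simp
    moreover have "w \<bullet> v \<ge> 1" using w that by simp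
    ultimately show ?thesis unfolding nm_def using w(1) by blast
  qed
  have nmneg: "nm (- v)" if nv: "nm v" for v
  proof -
    obtain w where w: "w \<in> W" "w \<bullet> v \<ge> 1" and vK: "v \<in> K0 W" using nv unfolding nm_def by blast
    have "- w \<in> W" using sym w by auto
    moreover have "(- w) \<bullet> (- v) \<ge> 1" using w by simp
    moreover have "- v \<in> K0 W" using vK K0_iff[OF fin ne] Fn_neg[OF fin ne sym] by simp
    ultimately show ?thesis unfolding nm_def by blast
  qed
  have n1: "nm v1" "nm v2" "nm v3" using nm1 v unfolding v3_def by auto
  then have n2: "nm (- v1)" "nm (- v2)" "nm (- v3)" using nmneg by auto
  define Sec where "Sec = (\<lambda>p q. {x. 0 \<le> det2 p x \<and> 0 < det2 x q})"
  have sec: "ennreal (1/2) \<le> emeasure lborel (K0 W \<inter> Sec p q)"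
    if h: "nm p" "nm q" "nm (p - q)" "det2 p q > 0" for p q
  proof -
    obtain w1 where "w1 \<in> W" "w1 \<bullet> p \<ge> 1" "p \<in> K0 W" using h(1) unfolding nm_def by blast
    moreover obtain w2 where "w2 \<in> W" "w2 \<bullet> q \<ge> 1" "q \<in> K0 W" using h(2) unfolding nm_def by blast
    moreover obtain w3 where "w3 \<in> W" "w3 \<bullet> (p - q) \<ge> 1" using h(3) unfolding nm_def by blast
    ultimately show ?thesis unfolding Sec_def using sector_W[OF det] h(4) by blast
  qed
  define d where "d = det2 v1 v2"
  have dd: "det2 v2 v3 = d" "det2 v3 (- v1) = d" "det2 (- v1) (- v2) = d"
    "det2 (- v2) (- v3) = d" "det2 (- v3) v1 = d"
    unfolding d_def v3_def using det2_swap[of v2 v1] by simp_all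
  define P where "P = [v1, v2, v3, - v1, - v2, - v3]"
  define R where "R = [v2, v3, - v1, - v2, - v3, v1]"
  define F where "F = (\<lambda>i. K0 W \<inter> Sec (P ! i) (R ! i))"
  have I6: "{..<6::nat} = {0,1,2,3,4,5}" by auto
  have h: "ennreal (1/2) \<le> emeasure lborel (F i)" if "i \<in> {..<6}" for i
  proof -
    have e1: "v1 - v2 = - v3" "v2 - v3 = v1" "v3 - - v1 = v2" "- v1 - - v2 = v3"
      "- v2 - - v3 = - v1" "- v3 - v1 = - v2" unfolding v3_def by simp_all
    have dp: "d > 0" using v(4) d_def by simp
    have s1: "ennreal (1/2) \<le> emeasure lborel (K0 W \<inter> Sec v1 v2)"
      by (rule sec) (simp_all only: e1 n1 n2 d_def[symmetric] dp)
    have s2: "ennreal (1/2) \<le> emeasure lborel (K0 W \<inter> Sec v2 v3)"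
      by (rule sec) (simp_all only: e1 n1 n2 dd dp)
    have s3: "ennreal (1/2) \<le> emeasure lborel (K0 W \<inter> Sec v3 (- v1))"
      by (rule sec) (simp_all only: e1 n1 n2 dd dp)
    have s4: "ennreal (1/2) \<le> emeasure lborel (K0 W \<inter> Sec (- v1) (- v2))"
      by (rule sec) (simp_all only: e1 n1 n2 dd dp)
    have s5: "ennreal (1/2) \<le> emeasure lborel (K0 W \<inter> Sec (- v2) (- v3))"
      by (rule sec) (simp_all only: e1 n1 n2 dd dp)
    have s6: "ennreal (1/2) \<le> emeasure lborel (K0 W \<inter> Sec (- v3) v1)"
      by (rule sec) (simp_all only: e1 n1 n2 dd dp)
    have "i = 0 \<or> i = 1 \<or> i = 2 \<or> i = 3 \<or> i = 4 \<or> i = 5" using that by auto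
    then show ?thesis unfolding F_def P_def R_def
      using s1 s2 s3 s4 s5 s6 by (elim disjE) simp_all
  qed
  have mF: "F ` {..<6} \<subseteq> sets lborel"
  proof -
    have "Sec p q \<in> sets lborel" for p q
    proof -
      have "Sec p q = {x. 0 \<le> det2 p x} \<inter> {x. 0 < det2 x q}" unfolding Sec_def by auto
      then show ?thesis by (simp only:) (intro sets.Int meas_ge meas_gt)
    qed
    then show ?thesis unfolding F_def using K0_meas by auto
  qed
  have disj: "disjoint_family_on F {..<6}"
  proof -
    have E: "\<And>x. det2 v2 x = - det2 x v2" "\<And>x. det2 x v1 = - det2 v1 x"
      by (rule det2_swap)+
    define A where "A = (\<lambda>x. det2 v1 x)"
    define B where "B = (\<lambda>x. det2 x v2)"
    have c0: "0 \<le> A x \<and> 0 < B x" if "x \<in> F 0" for x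
      using that unfolding F_def P_def R_def Sec_def v3_def A_def B_def by (simp add: E)
    have c1: "0 \<le> - B x \<and> 0 < B x + A x" if "x \<in> F 1" for x
      using that unfolding F_def P_def R_def Sec_def v3_def A_def B_def by (simp add: E)
    have c2: "0 \<le> - B x - A x \<and> 0 < A x" if "x \<in> F 2" for x
      using that unfolding F_def P_def R_def Sec_def v3_def A_def B_def by (simp add: E)
    have c3: "0 \<le> - A x \<and> 0 < - B x" if "x \<in> F 3" for x
      using that unfolding F_def P_def R_def Sec_def v3_def A_def B_def by (simp add: E)
    have c4: "0 \<le> B x \<and> 0 < - B x - A x" if "x \<in> F 4" for x
      using that unfolding F_def P_def R_def Sec_def v3_def A_def B_def by (simp add: E)
    have c5: "0 \<le> A x + B x \<and> 0 < - A x" if "x \<in> F 5" for x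
      using that unfolding F_def P_def R_def Sec_def v3_def A_def B_def by (simp add: E)
    have d01: "F 0 \<inter> F 1 = {}"
    proof -
      { fix x assume x: "x \<in> F 0" "x \<in> F 1"
        from c0[OF x(1)] c1[OF x(2)] have False by linarith }
      then show ?thesis by blast
    qed
    have d02: "F 0 \<inter> F 2 = {}"
    proof -
      { fix x assume x: "x \<in> F 0" "x \<in> F 2"
        from c0[OF x(1)] c2[OF x(2)] have False by linarith }
      then show ?thesis by blast
    qed
    have d03: "F 0 \<inter> F 3 = {}"
    proof -
      { fix x assume x: "x \<in> F 0" "x \<in> F 3"
        from c0[OF x(1)] c3[OF x(2)] have False by linarith }
      then show ?thesis by blast
    qed
    have d04: "F 0 \<inter> F 4 = {}"
    proof -
      { fix x assume x: "x \<in> F 0" "x \<in> F 4"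
        from c0[OF x(1)] c4[OF x(2)] have False by linarith }
      then show ?thesis by blast
    qed
    have d05: "F 0 \<inter> F 5 = {}"
    proof -
      { fix x assume x: "x \<in> F 0" "x \<in> F 5"
        from c0[OF x(1)] c5[OF x(2)] have False by linarith }
      then show ?thesis by blast
    qed
    have d12: "F 1 \<inter> F 2 = {}"
    proof -
      { fix x assume x: "x \<in> F 1" "x \<in> F 2"
        from c1[OF x(1)] c2[OF x(2)] have False by linarith }
      then show ?thesis by blast
    qed
    have d13: "F 1 \<inter> F 3 = {}"
    proof -
      { fix x assume x: "x \<in> F 1" "x \<in> F 3"
        from c1[OF x(1)] c3[OF x(2)] have False by linarith }
      then show ?thesis by blast
    qed
    have d14: "F 1 \<inter> F 4 = {}"
    proof -
      { fix x assume x: "x \<in> F 1" "x \<in> F 4"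
        from c1[OF x(1)] c4[OF x(2)] have False by linarith }
      then show ?thesis by blast
    qed
    have d15: "F 1 \<inter> F 5 = {}"
    proof -
      { fix x assume x: "x \<in> F 1" "x \<in> F 5"
        from c1[OF x(1)] c5[OF x(2)] have False by linarith }
      then show ?thesis by blast
    qed
    have d23: "F 2 \<inter> F 3 = {}"
    proof -
      { fix x assume x: "x \<in> F 2" "x \<in> F 3"
        from c2[OF x(1)] c3[OF x(2)] have False by linarith }
      then show ?thesis by blast
    qed
    have d24: "F 2 \<inter> F 4 = {}"
    proof -
      { fix x assume x: "x \<in> F 2" "x \<in> F 4"
        from c2[OF x(1)] c4[OF x(2)] have False by linarith }
      then show ?thesis by blast
    qed
    have d25: "F 2 \<inter> F 5 = {}"
    proof -
      { fix x assume x: "x \<in> F 2" "x \<in> F 5"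
        from c2[OF x(1)] c5[OF x(2)] have False by linarith }
      then show ?thesis by blast
    qed
    have d34: "F 3 \<inter> F 4 = {}"
    proof -
      { fix x assume x: "x \<in> F 3" "x \<in> F 4"
        from c3[OF x(1)] c4[OF x(2)] have False by linarith }
      then show ?thesis by blast
    qed
    have d35: "F 3 \<inter> F 5 = {}"
    proof -
      { fix x assume x: "x \<in> F 3" "x \<in> F 5"
        from c3[OF x(1)] c5[OF x(2)] have False by linarith }
      then show ?thesis by blast
    qed
    have d45: "F 4 \<inter> F 5 = {}"
    proof -
      { fix x assume x: "x \<in> F 4" "x \<in> F 5"
        from c4[OF x(1)] c5[OF x(2)] have False by linarith }
      then show ?thesis by blast
    qed
    note dd = d01 d02 d03 d04 d05 d12 d13 d14 d15 d23 d24 d25 d34 d35 d45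
    have pair: "F i \<inter> F j = {}" if "i \<in> {..<6}" "j \<in> {..<6}" "i \<noteq> j" for i j
    proof -
      have "i = 0 \<or> i = 1 \<or> i = 2 \<or> i = 3 \<or> i = 4 \<or> i = 5" using that by auto
      moreover have "j = 0 \<or> j = 1 \<or> j = 2 \<or> j = 3 \<or> j = 4 \<or> j = 5" using that by auto
      ultimately show ?thesis using that(3)
        by (elim disjE) (simp_all add: dd[simplified] Int_commute)
    qed
    show ?thesis unfolding disjoint_family_on_def using pair by blast
  qed
  have "ennreal 3 = ennreal (\<Sum>i\<in>{..<6::nat}. 1/2)" by simp
  also have "\<dots> = (\<Sum>i\<in>{..<6::nat}. ennreal (1/2))" by (rule sum_ennreal[symmetric]) simp
  also have "\<dots> \<le> (\<Sum>i\<in>{..<6::nat}. emeasure lborel (F i))" by (rule sum_mono) (rule h)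
  also have "\<dots> = emeasure lborel (\<Union>i\<in>{..<6::nat}. F i)" by (rule sum_emeasure[OF mF disj]) simp
  also have "\<dots> \<le> emeasure lborel (K0 W)" by (rule emeasure_mono[OF _ K0_meas]) (auto simp: F_def)
  also have "\<dots> \<le> emeasure lborel (polar Q)"
  proof (rule emeasure_mono)
    show "K0 W \<subseteq> polar Q"
    proof
      fix z assume z: "z \<in> K0 W"
      have "S \<subseteq> {y. z \<bullet> y \<le> 1}" using z unfolding K0_def W_def by (auto simp: inner_commute)
      then have "Q \<subseteq> {y. z \<bullet> y \<le> 1}" unfolding S(2)
        by (intro hull_minimal) (auto intro: convex_halfspace_le)
      then have "Q \<subseteq> {y. y \<bullet> z \<le> 1}" by (auto simp: inner_commute)
      then show "z \<in> polar Q" unfolding polar_def by auto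
    qed
    have "polar Q = (\<Inter>y\<in>Q. {x. y \<bullet> x \<le> 1})" unfolding polar_def by auto
    then have "closed (polar Q)" by (auto intro!: closed_INT closed_halfspace_le)
    then show "polar Q \<in> sets lborel" unfolding sets_lborel by (rule borel_closed)
  qed
  finally show ?thesis by simp
qed

end
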